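(* For every finite simple graph $G$ with complement $\overline{G}$, \[ \xi_f(\overline{G}) = \operatorname{mr}_f^+(G). \]
   Context: All graphs are finite and simple; $\overline{G}$ has the same vertex set as $G$, and distinct $u,v$ are adjacent in $\overline{G}$ iff they are not adjacent in $G$. For $d,r\in\mathbb{N}$ with $r\le d$, a $d/r$-representation of a graph $H$ is an assignment of matrices $P_u\in\mathbb{C}^{d\times d}$, $u\in V(H)$, with $\operatorname{rank}P_u=r$, $P_u^*=P_u$, $P_u^2=P_u$, such that $P_uP_v=0$ whenever $uv\in E(H)$. The projective rank is $\xi_f(H)=\inf\{d/r : H \text{ has a } d/r\text{-representation}\}$. A $(d;r)$ faithful orthogonal subspace representation of $G$ is a family $\{S_u\}_{u\in V(G)}$ of $r$-dimensional subspaces of $\mathbb{C}^d$ such that for distinct $u,v$, $S_u\perp S_v$ if and only if $uv\notin E(G)$. The $r$-fold minimum positive semidefinite rank $\operatorname{mr}^+_{[r]}(G)$ is the minimum $d$ such that $G$ has a $(d;r)$ faithful orthogonal subspace representation, and the fractional minimum positive semidefinite rank is $\operatorname{mr}^+_f(G)=\inf_{r\in\mathbb{N}} \operatorname{mr}^+_{[r]}(G)/r$. *)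

theory Defs
  imports "Jordan_Normal_Form.DL_Rank" "Jordan_Normal_Form.Schur_Decomposition"
    "Jordan_Normal_Form.Conjugate"
begin

(* Graphs: vertex type 'v (finite, hence nonempty), adjacency E :: 'v => 'v => bool. *)
definition simple_graph :: "('v \<Rightarrow> 'v \<Rightarrow> bool) \<Rightarrow> bool" where
  "simple_graph E \<longleftrightarrow> (\<forall>u v. E u v \<longrightarrow> E v u) \<and> (\<forall>u. \<not> E u u)"

definition complement_graph :: "('v \<Rightarrow> 'v \<Rightarrow> bool) \<Rightarrow> 'v \<Rightarrow> 'v \<Rightarrow> bool" where
  "complement_graph E u v \<longleftrightarrow> u \<noteq> v \<and> \<not> E u v"

definition dr_representation ::
  "('v \<Rightarrow> 'v \<Rightarrow> bool) \<Rightarrow> nat \<Rightarrow> nat \<Rightarrow> ('v \<Rightarrow> complex mat) \<Rightarrow> bool" where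
  "dr_representation H d r P \<longleftrightarrow>
     (\<forall>u. P u \<in> carrier_mat d d \<and> vec_space.rank d (P u) = r
          \<and> mat_adjoint (P u) = P u \<and> P u * P u = P u) \<and>
     (\<forall>u v. H u v \<longrightarrow> P u * P v = 0\<^sub>m d d)"

definition projective_rank :: "('v \<Rightarrow> 'v \<Rightarrow> bool) \<Rightarrow> real" where
  "projective_rank H = Inf {real d / real r | d r. 0 < r \<and> r \<le> d \<and>
      (\<exists>P. dr_representation H d r P)}"

definition dim_subspace :: "nat \<Rightarrow> nat \<Rightarrow> complex vec set \<Rightarrow> bool" where
  "dim_subspace d r S \<longleftrightarrow> VectorSpace.subspace class_ring S (module_vec TYPE(complex) d) \<and>
     vectorspace.dim class_ring ((module_vec TYPE(complex) d)\<lparr>carrier := S\<rparr>) = r"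

definition subspaces_orth :: "complex vec set \<Rightarrow> complex vec set \<Rightarrow> bool" where
  "subspaces_orth S T \<longleftrightarrow> (\<forall>x\<in>S. \<forall>y\<in>T. x \<bullet>c y = 0)"

definition faithful_osr ::
  "('v \<Rightarrow> 'v \<Rightarrow> bool) \<Rightarrow> nat \<Rightarrow> nat \<Rightarrow> ('v \<Rightarrow> complex vec set) \<Rightarrow> bool" where
  "faithful_osr G d r S \<longleftrightarrow> (\<forall>u. dim_subspace d r (S u)) \<and>
     (\<forall>u v. u \<noteq> v \<longrightarrow> (subspaces_orth (S u) (S v) \<longleftrightarrow> \<not> G u v))"

definition mr_plus_fold :: "('v \<Rightarrow> 'v \<Rightarrow> bool) \<Rightarrow> nat \<Rightarrow> nat" where
  "mr_plus_fold G r = (LEAST d. \<exists>S. faithful_osr G d r S)"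

definition mr_plus_frac :: "('v \<Rightarrow> 'v \<Rightarrow> bool) \<Rightarrow> real" where
  "mr_plus_frac G = Inf {real (mr_plus_fold G r) / real r | r. 0 < r}"

end

theory Submission
  imports Defs
begin

lemma adj_dims[simp]: "dim_row (mat_adjoint A) = dim_col A" "dim_col (mat_adjoint A) = dim_row A"
  unfolding mat_adjoint_def by auto
lemma adj_index[simp]: "i < dim_col A \<Longrightarrow> j < dim_row A \<Longrightarrow> mat_adjoint A $$ (i,j) = conjugate (A $$ (j,i))"
  unfolding mat_adjoint_def by (auto simp: mat_of_rows_def)
lemma adj_carrier[simp,intro]: "A \<in> carrier_mat m n \<Longrightarrow> mat_adjoint A \<in> carrier_mat n m"
  by auto
lemma adj_adj[simp]: "mat_adjoint (mat_adjoint (A::complex mat)) = A"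
  by (rule eq_matI, auto)
lemma adj_mult: fixes A B :: "complex mat"
  assumes "A \<in> carrier_mat m n" "B \<in> carrier_mat n p"
  shows "mat_adjoint (A * B) = mat_adjoint B * mat_adjoint A"
  using assms by (intro eq_matI) (auto simp: scalar_prod_def cnj_sum mult.commute)
lemma adj_zero[simp]: "mat_adjoint (0\<^sub>m m n :: complex mat) = 0\<^sub>m n m"
  by (rule eq_matI, auto)
lemma adj_entry: fixes A B :: "complex mat"
  assumes "A \<in> carrier_mat d n" "B \<in> carrier_mat d m" "i < n" "j < m"
  shows "(mat_adjoint B * A) $$ (j,i) = col A i \<bullet>c col B j"
  using assms by (auto simp: scalar_prod_def mult.commute intro!: sum.cong)
lemma cscalar_swap: fixes x y :: "complex vec"
  assumes "x \<in> carrier_vec n" "y \<in> carrier_vec n"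
  shows "x \<bullet>c y = cnj (y \<bullet>c x)"
  using assms by (auto simp: scalar_prod_def cnj_sum mult.commute intro!: sum.cong)
lemma cscalar_mat: fixes x b :: "complex vec"
  assumes "x \<in> carrier_vec d" "B \<in> carrier_mat d r" "b \<in> carrier_vec r"
  shows "x \<bullet>c (B *\<^sub>v b) = (mat_adjoint B *\<^sub>v x) \<bullet>c b"
proof -
  have "x \<bullet>c (B *\<^sub>v b) = (\<Sum>k<d. x $ k * (\<Sum>j<r. cnj (B $$ (k,j)) * cnj (b $ j)))"
    using assms by (auto simp: scalar_prod_def cnj_sum lessThan_atLeast0 intro!: sum.cong)
  also have "\<dots> = (\<Sum>k<d. \<Sum>j<r. x $ k * cnj (B $$ (k,j)) * cnj (b $ j))"
    by (simp add: sum_distrib_left mult.assoc)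
  also have "\<dots> = (\<Sum>j<r. \<Sum>k<d. x $ k * cnj (B $$ (k,j)) * cnj (b $ j))"
    by (rule sum.swap)
  also have "\<dots> = (\<Sum>j<r. (\<Sum>k<d. cnj (B $$ (k,j)) * x $ k) * cnj (b $ j))"
    by (simp add: sum_distrib_right sum_distrib_left ac_simps)
  also have "\<dots> = (mat_adjoint B *\<^sub>v x) \<bullet>c b"
    using assms by (auto simp: scalar_prod_def lessThan_atLeast0 intro!: sum.cong)
  finally show ?thesis .
qed

lemma zero_mult_vec'[simp]: "(v::'a::comm_ring_1 vec) \<in> carrier_vec n \<Longrightarrow> 0\<^sub>m m n *\<^sub>v v = 0\<^sub>v m"
  by (intro eq_vecI) (auto simp: scalar_prod_def)

lemma col_in_csp: fixes A :: "complex mat"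
  assumes "A \<in> carrier_mat d n" "i < n"
  shows "col A i \<in> vec_space.col_space d A"
proof -
  interpret vec_space "TYPE(complex)" d .
  have "set (cols A) \<subseteq> carrier_vec d" using assms cols_dim by blast
  moreover have "col A i \<in> set (cols A)" using assms by (auto simp: cols_def)
  ultimately show ?thesis unfolding col_space_def by (meson in_own_span subsetD)
qed

lemma csp_eq: fixes A :: "complex mat"
  assumes "A \<in> carrier_mat d n"
  shows "vec_space.col_space d A = {A *\<^sub>v x | x. x \<in> carrier_vec n}"
proof -
  interpret vec_space "TYPE(complex)" d .
  show ?thesis using col_space_eq[OF assms] assms by auto
qed

lemma orth_iff: fixes A B :: "complex mat"
  assumes A: "A \<in> carrier_mat d n" and B: "B \<in> carrier_mat d m"
  shows "subspaces_orth (vec_space.col_space d A) (vec_space.col_space d B)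
     \<longleftrightarrow> mat_adjoint B * A = 0\<^sub>m m n"
proof
  assume o: "subspaces_orth (vec_space.col_space d A) (vec_space.col_space d B)"
  show "mat_adjoint B * A = 0\<^sub>m m n"
  proof (rule eq_matI)
    fix j i assume ij: "j < dim_row (0\<^sub>m m n :: complex mat)" "i < dim_col (0\<^sub>m m n :: complex mat)"
    hence "(mat_adjoint B * A) $$ (j,i) = col A i \<bullet>c col B j"
      using adj_entry[OF A B] by auto
    also have "\<dots> = 0" using o col_in_csp[OF A, of i] col_in_csp[OF B, of j] ij
      unfolding subspaces_orth_def by auto
    finally show "(mat_adjoint B * A) $$ (j,i) = 0\<^sub>m m n $$ (j,i)" using ij by simp
  qed (use A B in auto)
next
  assume z: "mat_adjoint B * A = 0\<^sub>m m n"
  show "subspaces_orth (vec_space.col_space d A) (vec_space.col_space d B)"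
    unfolding subspaces_orth_def csp_eq[OF A] csp_eq[OF B]
  proof (intro ballI, elim CollectE exE conjE)
    fix x y a b assume x: "x = A *\<^sub>v a" "a \<in> carrier_vec n" and y: "y = B *\<^sub>v b" "b \<in> carrier_vec m"
    have "x \<bullet>c y = (mat_adjoint B *\<^sub>v (A *\<^sub>v a)) \<bullet>c b"
      using cscalar_mat[OF mult_mat_vec_carrier[OF A x(2)] B y(2)] x y by simp
    also have "\<dots> = ((mat_adjoint B * A) *\<^sub>v a) \<bullet>c b"
      using assoc_mult_mat_vec[of "mat_adjoint B" m d A n a] A B x by simp
    also have "\<dots> = 0" using z x(2) y(2) by simp
    finally show "x \<bullet>c y = 0" .
  qed
qed

definition orthc :: "complex mat \<Rightarrow> nat \<Rightarrow> nat \<Rightarrow> bool" where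
  "orthc W d r \<longleftrightarrow> W \<in> carrier_mat d r \<and> mat_adjoint W * W = 1\<^sub>m r"

lemma rank_orthc: assumes "orthc W d r" shows "vec_space.rank d W = r"
proof -
  interpret vec_space "TYPE(complex)" d .
  have W: "W \<in> carrier_mat d r" and I: "mat_adjoint W * W = 1\<^sub>m r" using assms unfolding orthc_def by auto
  have e: "col W i \<bullet>c col W j = (if i = j then 1 else 0)" if "i < r" "j < r" for i j
    using adj_entry[OF W W that(1) that(2)] I that by auto
  have dist: "distinct (cols W)"
  proof (rule ccontr)
    assume "\<not> distinct (cols W)"
    then obtain i j where "i < r" "j < r" "i \<noteq> j" "cols W ! i = cols W ! j"
      using W by (auto simp: distinct_conv_nth)
    hence "col W i = col W j" "i<r" "j<r" "i\<noteq>j" using W by auto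
    thus False using e[of i j] e[of j j] by auto
  qed
  have li: "lin_indpt (set (cols W))"
  proof
    assume "lin_dep (set (cols W))"
    then obtain v where v: "v \<in> carrier_vec r" "v \<noteq> 0\<^sub>v r" "W *\<^sub>v v = 0\<^sub>v d"
      using lin_depE[OF W _ dist] by blast
    have "v = (mat_adjoint W * W) *\<^sub>v v" using I v by simp
    also have "\<dots> = mat_adjoint W *\<^sub>v (W *\<^sub>v v)" by (rule assoc_mult_mat_vec) (use W v in auto)
    also have "\<dots> = 0\<^sub>v r" using v W by (intro eq_vecI) (auto simp: scalar_prod_def)
    finally show False using v by simp
  qed
  show ?thesis using lin_indpt_full_rank[OF W dist li] .
qed

lemma dim_sub_rank: fixes W :: "complex mat"
  assumes "W \<in> carrier_mat d n" "vec_space.rank d W = r"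
  shows "dim_subspace d r (vec_space.col_space d W)"
proof -
  interpret vec_space "TYPE(complex)" d .
  have "set (cols W) \<subseteq> carrier_vec d" using assms cols_dim by blast
  hence "VectorSpace.subspace class_ring (span (set (cols W))) V" using span_is_subspace by auto
  thus ?thesis using assms unfolding dim_subspace_def col_space_def rank_def by auto
qed

lemma proj_props: assumes o: "orthc W d r"
  shows "W * mat_adjoint W \<in> carrier_mat d d"
    "mat_adjoint (W * mat_adjoint W) = W * mat_adjoint W"
    "(W * mat_adjoint W) * (W * mat_adjoint W) = W * mat_adjoint W"
    "vec_space.rank d (W * mat_adjoint W) = r"
proof -
  have W: "W \<in> carrier_mat d r" and I: "mat_adjoint W * W = 1\<^sub>m r" using o unfolding orthc_def by auto
  have Wa: "mat_adjoint W \<in> carrier_mat r d" using W by auto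
  show P: "W * mat_adjoint W \<in> carrier_mat d d" using W by auto
  show "mat_adjoint (W * mat_adjoint W) = W * mat_adjoint W" using adj_mult[OF W Wa] by simp
  have PW: "(W * mat_adjoint W) * W = W"
    using assoc_mult_mat[OF W Wa W] I W by simp
  show "(W * mat_adjoint W) * (W * mat_adjoint W) = W * mat_adjoint W"
    using assoc_mult_mat[OF P W Wa] PW by simp
  have "vec_space.col_space d (W * mat_adjoint W) = vec_space.col_space d W"
  proof -
    have "{W * mat_adjoint W *\<^sub>v x |x. x \<in> carrier_vec d} = {W *\<^sub>v x |x. x \<in> carrier_vec r}"
    proof (intro equalityI subsetI; elim CollectE exE conjE)
      fix y x assume "y = W * mat_adjoint W *\<^sub>v x" "x \<in> carrier_vec d"
      thus "y \<in> {W *\<^sub>v x |x. x \<in> carrier_vec r}"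
        using assoc_mult_mat_vec[OF W Wa, of x] Wa by auto
    next
      fix y x assume y: "y = W *\<^sub>v x" "x \<in> carrier_vec r"
      have "W * mat_adjoint W *\<^sub>v (W *\<^sub>v x) = W *\<^sub>v x"
        using assoc_mult_mat_vec[OF P W y(2)] PW by simp
      thus "y \<in> {W * mat_adjoint W *\<^sub>v x |x. x \<in> carrier_vec d}"
        using y W by (intro CollectI exI[of _ "W *\<^sub>v x"]) auto
    qed
    thus ?thesis using csp_eq[OF P] csp_eq[OF W] by simp
  qed
  thus "vec_space.rank d (W * mat_adjoint W) = r"
    using rank_orthc[OF o] unfolding vec_space.rank_def vec_space.col_space_def by metis
qed

lemma proj_zero: assumes "orthc W d r" "orthc V d r'" "mat_adjoint W * V = 0\<^sub>m r r'"
  shows "(W * mat_adjoint W) * (V * mat_adjoint V) = 0\<^sub>m d d"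
proof -
  have W: "W \<in> carrier_mat d r" and V: "V \<in> carrier_mat d r'" using assms unfolding orthc_def by auto
  have Wa: "mat_adjoint W \<in> carrier_mat r d" and Va: "mat_adjoint V \<in> carrier_mat r' d" using W V by auto
  have "(W * mat_adjoint W) * (V * mat_adjoint V) = W * (mat_adjoint W * (V * mat_adjoint V))"
    by (rule assoc_mult_mat[OF W Wa]) (use V Va in auto)
  also have "mat_adjoint W * (V * mat_adjoint V) = (mat_adjoint W * V) * mat_adjoint V"
    by (rule assoc_mult_mat[OF Wa V Va, symmetric])
  also have "\<dots> = 0\<^sub>m r d" using assms(3) Va by (simp add: left_mult_zero_mat[OF Va])
  also have "W * 0\<^sub>m r d = 0\<^sub>m d d" using W by simp
  finally show ?thesis .
qed

lemma norm_cscalar: fixes u :: "complex vec" assumes "u \<in> carrier_vec n" "u \<noteq> 0\<^sub>v n"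
  shows "Re (u \<bullet>c u) > 0" "u \<bullet>c u = of_real (Re (u \<bullet>c u))"
proof -
  have "u \<bullet>c u > 0" using assms conjugate_square_greater_0_vec by blast
  thus "Re (u \<bullet>c u) > 0" "u \<bullet>c u = of_real (Re (u \<bullet>c u))"
    by (auto simp: less_complex_def complex_eq_iff)
qed

definition nrm :: "complex vec \<Rightarrow> complex vec" where
  "nrm u = complex_of_real (1 / sqrt (Re (u \<bullet>c u))) \<cdot>\<^sub>v u"

lemma nrm_cscalar: fixes u v :: "complex vec" assumes "u \<in> carrier_vec n" "v \<in> carrier_vec n"
  shows "nrm u \<bullet>c nrm v = complex_of_real (1 / sqrt (Re (u \<bullet>c u))) * complex_of_real (1 / sqrt (Re (v \<bullet>c v))) * (u \<bullet>c v)"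
  using assms unfolding nrm_def by (simp add: conjugate_smult_vec)

lemma gs_basis: assumes "dim_subspace d r S"
  shows "\<exists>W. orthc W d r \<and> vec_space.col_space d W = S"
proof -
  interpret vec_space "TYPE(complex)" d .
  interpret cof_vec_space d "TYPE(complex)" .
  have sub: "VectorSpace.subspace class_ring S V" and dimS: "vectorspace.dim class_ring (vs S) = r"
    using assms unfolding dim_subspace_def by auto
  have SV: "S \<subseteq> carrier_vec d" using sub unfolding VectorSpace.subspace_def submodule_def by auto
  have subm: "submodule class_ring S V" using sub unfolding VectorSpace.subspace_def by auto
  have vsS: "vectorspace class_ring (vs S)" using subspace_is_vs[OF sub] .
  let ?P = "\<lambda>T. T \<subseteq> S \<and> lin_indpt T"
  have bnd: "finite T \<and> card T \<le> d" if "?P T" for T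
    using li_le_dim[of T] that SV dim_is_n by auto
  have "?P {}" unfolding lin_dep_def by auto
  from maximal_exists[of ?P d "{}", OF bnd this]
  obtain B where finB: "finite B" and maxB: "maximal B ?P" by blast
  have BS: "B \<subseteq> S" and liB: "lin_indpt B" using maxB unfolding maximal_def by auto
  have eqli: "module.lin_dep class_ring (vs S) T = lin_dep T" if "T \<subseteq> S" for T
    using span_li_not_depend(2)[OF that subm] .
  have eqsp: "LinearCombinations.module.span class_ring (vs S) T = span T" if "T \<subseteq> S" for T
    using span_li_not_depend(1)[OF that subm] .
  have "maximal B (\<lambda>T. T \<subseteq> carrier (vs S) \<and> \<not> module.lin_dep class_ring (vs S) T)"
    using maxB eqli unfolding maximal_def by auto
  hence basB: "vectorspace.basis class_ring (vs S) B"
    using vectorspace.max_li_is_basis[OF vsS] by blast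
  have cardB: "card B = r" using vectorspace.dim_basis[OF vsS finB basB] dimS by simp
  have spanB: "span B = S" using basB eqsp[OF BS] vectorspace.basis_def[OF vsS] by auto
  obtain ws where ws: "set ws = B" "distinct ws" using finite_distinct_list[OF finB] by blast
  have lenws: "length ws = r" using ws cardB distinct_card by fastforce
  define us where "us = gram_schmidt d ws"
  have wsC: "set ws \<subseteq> carrier_vec d" using ws BS SV by auto
  note gs = gram_schmidt_result[OF wsC ws(2) _ us_def, unfolded ws(1), OF liB]
  have spus: "span (set us) = S" using gs(1) spanB by simp
  have cog: "corthogonal us" and usC: "set us \<subseteq> carrier_vec d" and lenus: "length us = r"
    using gs lenws by auto
  have nz: "us ! i \<noteq> 0\<^sub>v d" if "i < r" for i
  proof
    assume "us ! i = 0\<^sub>v d"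
    hence "us ! i \<bullet>c us ! i = 0" by simp
    thus False using corthogonalD[OF cog, of i i] that lenus by auto
  qed
  have usiC: "us ! i \<in> carrier_vec d" if "i < r" for i using usC that lenus by auto
  define vs' where "vs' = map nrm us"
  have vsC: "set vs' \<subseteq> carrier_vec d" using usC unfolding vs'_def nrm_def by auto
  define W where "W = mat_of_cols d vs'"
  have W: "W \<in> carrier_mat d r" unfolding W_def using lenus vs'_def by auto
  have colsW: "cols W = vs'" unfolding W_def using vsC by simp
  have colW: "col W i = nrm (us ! i)" if "i < r" for i
    using colsW that lenus W unfolding vs'_def by (metis cols_nth carrier_matD(2) nth_map)
  have orth: "orthc W d r" unfolding orthc_def
  proof (intro conjI W eq_matI)
    fix i j assume ij: "i < dim_row (1\<^sub>m r :: complex mat)" "j < dim_col (1\<^sub>m r :: complex mat)"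
    hence ij': "i < r" "j < r" by auto
    have "(mat_adjoint W * W) $$ (i,j) = col W j \<bullet>c col W i" using adj_entry[OF W W ij'(2) ij'(1)] .
    also have "\<dots> = nrm (us ! j) \<bullet>c nrm (us ! i)" using colW ij' by simp
    also have "\<dots> = (if i = j then 1 else 0)"
    proof (cases "i = j")
      case True
      let ?z = "us ! i \<bullet>c us ! i"
      have p: "Re ?z > 0" "?z = of_real (Re ?z)" using norm_cscalar[OF usiC nz] ij' by auto
      have "nrm (us ! j) \<bullet>c nrm (us ! i) = complex_of_real (1 / sqrt (Re ?z)) * complex_of_real (1 / sqrt (Re ?z)) * of_real (Re ?z)"
        using nrm_cscalar[OF usiC usiC, of i i] ij' True p(2) by simp
      also have "\<dots> = complex_of_real (1 / sqrt (Re ?z) * (1 / sqrt (Re ?z)) * Re ?z)" by (simp only: of_real_mult)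
      also have "1 / sqrt (Re ?z) * (1 / sqrt (Re ?z)) * Re ?z = 1"
        using p(1) by (simp add: field_simps)
      finally show ?thesis using True by simp
    next
      case False
      have "us ! j \<bullet>c us ! i = 0" using corthogonalD[OF cog, of j i] ij' lenus False by auto
      thus ?thesis using nrm_cscalar[OF usiC usiC, of j i] ij' False by simp
    qed
    finally show "(mat_adjoint W * W) $$ (i,j) = 1\<^sub>m r $$ (i,j)" using ij' by simp
  qed (use W in auto)
  have "span (set vs') = span (set us)"
  proof (rule equalityI)
    show "span (set vs') \<subseteq> span (set us)"
    proof (rule span_subsetI[OF usC], rule subsetI)
      fix v assume "v \<in> set vs'"
      then obtain u where u: "u \<in> set us" "v = nrm u" unfolding vs'_def by auto
      have "u \<in> span (set us)" using u in_own_span[OF usC] by auto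
      thus "v \<in> span (set us)" unfolding u(2) nrm_def by (rule smult_in_span[OF usC])
    qed
    show "span (set us) \<subseteq> span (set vs')"
    proof (rule span_subsetI[OF vsC], rule subsetI)
      fix u assume u: "u \<in> set us"
      then obtain i where i: "i < r" "u = us ! i" using lenus by (metis in_set_conv_nth)
      let ?c = "complex_of_real (1 / sqrt (Re (u \<bullet>c u)))"
      have "Re (u \<bullet>c u) > 0" using norm_cscalar[OF usiC nz] i by auto
      hence c0: "?c \<noteq> 0" by simp
      have uC: "u \<in> carrier_vec d" using u usC by auto
      have "u = inverse ?c \<cdot>\<^sub>v nrm u" unfolding nrm_def using c0 uC
        by (simp add: smult_smult_assoc)
      moreover have "nrm u \<in> span (set vs')" using u unfolding vs'_def
        using in_own_span[OF vsC] vs'_def by auto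
      hence "inverse ?c \<cdot>\<^sub>v nrm u \<in> span (set vs')" by (rule smult_in_span[OF vsC])
      ultimately show "u \<in> span (set vs')" by simp
    qed
  qed
  hence "col_space W = S" unfolding col_space_def colsW spus by simp
  thus ?thesis using orth by blast
qed

lemma proj_factor: fixes P :: "complex mat"
  assumes P: "P \<in> carrier_mat d d" and h: "mat_adjoint P = P" and i: "P * P = P"
    and rk: "vec_space.rank d P = r"
  shows "\<exists>W. orthc W d r \<and> W * mat_adjoint W = P"
proof -
  obtain W where o: "orthc W d r" and cs: "vec_space.col_space d W = vec_space.col_space d P"
    using gs_basis[OF dim_sub_rank[OF P rk]] by blast
  have W: "W \<in> carrier_mat d r" and I: "mat_adjoint W * W = 1\<^sub>m r" using o unfolding orthc_def by auto
  have Wa: "mat_adjoint W \<in> carrier_mat r d" using W by auto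
  have Q: "W * mat_adjoint W \<in> carrier_mat d d" using W by auto
  have PW: "P * W = W"
  proof (rule mat_col_eqI)
    fix j assume j: "j < dim_col W"
    hence j': "j < r" using W by auto
    have "col W j \<in> vec_space.col_space d P" using col_in_csp[OF W j'] cs by simp
    then obtain x where x: "x \<in> carrier_vec d" "col W j = P *\<^sub>v x" using csp_eq[OF P] by auto
    have "col (P * W) j = P *\<^sub>v col W j" using col_mult2[OF P W j'] .
    also have "\<dots> = (P * P) *\<^sub>v x" using x assoc_mult_mat_vec[OF P P x(1)] by simp
    also have "\<dots> = col W j" using i x by simp
    finally show "col (P * W) j = col W j" .
  qed (use P W in auto)
  have QP: "(W * mat_adjoint W) * P = P"
  proof (rule mat_col_eqI)
    fix j assume j: "j < dim_col P"
    hence j': "j < d" using P by auto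
    have "col P j \<in> vec_space.col_space d W" using col_in_csp[OF P j'] cs by simp
    then obtain x where x: "x \<in> carrier_vec r" "col P j = W *\<^sub>v x" using csp_eq[OF W] by auto
    have "col ((W * mat_adjoint W) * P) j = (W * mat_adjoint W) *\<^sub>v col P j" using col_mult2[OF Q P j'] .
    also have "\<dots> = W *\<^sub>v (mat_adjoint W *\<^sub>v (W *\<^sub>v x))" using x assoc_mult_mat_vec[OF W Wa, of "W *\<^sub>v x"] W by simp
    also have "mat_adjoint W *\<^sub>v (W *\<^sub>v x) = (mat_adjoint W * W) *\<^sub>v x"
      using assoc_mult_mat_vec[OF Wa W x(1)] by simp
    also have "\<dots> = x" using I x by simp
    finally show "col ((W * mat_adjoint W) * P) j = col P j" using x by simp
  qed (use P W in auto)
  have "P = mat_adjoint ((W * mat_adjoint W) * P)" using QP h by simp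
  also have "\<dots> = mat_adjoint P * mat_adjoint (W * mat_adjoint W)" using adj_mult[OF Q P] .
  also have "\<dots> = P * (W * mat_adjoint W)" using h adj_mult[OF W Wa] by simp
  also have "\<dots> = (P * W) * mat_adjoint W" using assoc_mult_mat[OF P W Wa] by simp
  also have "\<dots> = W * mat_adjoint W" using PW by simp
  finally show ?thesis using o by metis
qed

definition bsum :: "complex mat \<Rightarrow> complex mat \<Rightarrow> complex mat" where
  "bsum A B = four_block_mat A (0\<^sub>m (dim_row A) (dim_col B)) (0\<^sub>m (dim_row B) (dim_col A)) B"

lemma bsum_carrier[simp,intro]: "A \<in> carrier_mat a1 a2 \<Longrightarrow> B \<in> carrier_mat b1 b2 \<Longrightarrow> bsum A B \<in> carrier_mat (a1+b1) (a2+b2)"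
  unfolding bsum_def by auto

lemma adj_bsum: "mat_adjoint (bsum A B) = bsum (mat_adjoint A) (mat_adjoint B)"
  unfolding bsum_def by (rule eq_matI) auto

lemma bsum_alt: "A \<in> carrier_mat a1 a2 \<Longrightarrow> B \<in> carrier_mat b1 b2 \<Longrightarrow>
  bsum A B = four_block_mat A (0\<^sub>m a1 b2) (0\<^sub>m b1 a2) B"
  unfolding bsum_def by auto

lemma bsum_mult: assumes "A \<in> carrier_mat a1 a2" "B \<in> carrier_mat b1 b2" "C \<in> carrier_mat a2 c" "D \<in> carrier_mat b2 e"
  shows "bsum A B * bsum C D = bsum (A * C) (B * D)"
proof -
  have "bsum A B * bsum C D = four_block_mat (A * C + 0\<^sub>m a1 b2 * 0\<^sub>m b2 c) (A * 0\<^sub>m a2 e + 0\<^sub>m a1 b2 * D)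
     (0\<^sub>m b1 a2 * C + B * 0\<^sub>m b2 c) (0\<^sub>m b1 a2 * 0\<^sub>m a2 e + B * D)"
    unfolding bsum_alt[OF assms(1,2)] bsum_alt[OF assms(3,4)] by (rule mult_four_block_mat) (use assms in auto)
  also have "\<dots> = bsum (A * C) (B * D)" using assms
    by (subst bsum_alt[of _ a1 c _ b1 e]) (auto intro!: cong_four_block_mat)
  finally show ?thesis .
qed

lemma bsum_zero_iff: assumes "A \<in> carrier_mat a1 a2" "B \<in> carrier_mat b1 b2"
  shows "bsum A B = 0\<^sub>m (a1+b1) (a2+b2) \<longleftrightarrow> A = 0\<^sub>m a1 a2 \<and> B = 0\<^sub>m b1 b2"
proof
  assume z: "bsum A B = 0\<^sub>m (a1+b1) (a2+b2)"
  have "A = 0\<^sub>m a1 a2"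
  proof (rule eq_matI)
    fix i j assume "i < dim_row (0\<^sub>m a1 a2 :: complex mat)" "j < dim_col (0\<^sub>m a1 a2 :: complex mat)"
    thus "A $$ (i,j) = 0\<^sub>m a1 a2 $$ (i,j)" using arg_cong[OF z, of "\<lambda>M. M $$ (i,j)"] assms
      unfolding bsum_def by auto
  qed (use assms in auto)
  moreover have "B = 0\<^sub>m b1 b2"
  proof (rule eq_matI)
    fix i j assume "i < dim_row (0\<^sub>m b1 b2 :: complex mat)" "j < dim_col (0\<^sub>m b1 b2 :: complex mat)"
    thus "B $$ (i,j) = 0\<^sub>m b1 b2 $$ (i,j)" using arg_cong[OF z, of "\<lambda>M. M $$ (i+a1,j+a2)"] assms
      unfolding bsum_def by auto
  qed (use assms in auto)
  ultimately show "A = 0\<^sub>m a1 a2 \<and> B = 0\<^sub>m b1 b2" ..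
next
  assume "A = 0\<^sub>m a1 a2 \<and> B = 0\<^sub>m b1 b2"
  thus "bsum A B = 0\<^sub>m (a1+b1) (a2+b2)" unfolding bsum_def by simp
qed

lemma bsum_orthc: assumes "orthc A d r" "orthc B d' r'" shows "orthc (bsum A B) (d+d') (r+r')"
proof -
  have A: "A \<in> carrier_mat d r" and B: "B \<in> carrier_mat d' r'" using assms unfolding orthc_def by auto
  have "mat_adjoint (bsum A B) * bsum A B = bsum (mat_adjoint A * A) (mat_adjoint B * B)"
    unfolding adj_bsum by (rule bsum_mult) (use A B in auto)
  also have "\<dots> = 1\<^sub>m (r+r')" using assms unfolding orthc_def bsum_def by simp
  finally show ?thesis unfolding orthc_def using A B by auto
qed

lemma bsum_inner: assumes "orthc A d r" "orthc B d' r'" "orthc A' d r" "orthc B' d' r'"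
  shows "mat_adjoint (bsum A B) * bsum A' B' = 0\<^sub>m (r+r') (r+r') \<longleftrightarrow>
     mat_adjoint A * A' = 0\<^sub>m r r \<and> mat_adjoint B * B' = 0\<^sub>m r' r'"
proof -
  have A: "A \<in> carrier_mat d r" "A' \<in> carrier_mat d r" and B: "B \<in> carrier_mat d' r'" "B' \<in> carrier_mat d' r'"
    using assms unfolding orthc_def by auto
  have "mat_adjoint (bsum A B) * bsum A' B' = bsum (mat_adjoint A * A') (mat_adjoint B * B')"
    unfolding adj_bsum by (rule bsum_mult) (use A B in auto)
  moreover have "mat_adjoint A * A' \<in> carrier_mat r r" "mat_adjoint B * B' \<in> carrier_mat r' r'" using A B by auto
  ultimately show ?thesis using bsum_zero_iff[of "mat_adjoint A * A'" r r "mat_adjoint B * B'" r' r'] by simp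
qed

definition frep :: "('v \<Rightarrow> 'v \<Rightarrow> bool) \<Rightarrow> ('v \<Rightarrow> complex mat) \<Rightarrow> nat \<Rightarrow> nat \<Rightarrow> bool" where
  "frep G W d r \<longleftrightarrow> (\<forall>u. orthc (W u) d r) \<and>
     (\<forall>u v. u \<noteq> v \<longrightarrow> (mat_adjoint (W u) * W v = 0\<^sub>m r r \<longleftrightarrow> \<not> G u v))"

definition wrep :: "('v \<Rightarrow> 'v \<Rightarrow> bool) \<Rightarrow> ('v \<Rightarrow> complex mat) \<Rightarrow> nat \<Rightarrow> nat \<Rightarrow> bool" where
  "wrep G W d r \<longleftrightarrow> (\<forall>u. orthc (W u) d r) \<and>
     (\<forall>u v. u \<noteq> v \<longrightarrow> \<not> G u v \<longrightarrow> mat_adjoint (W u) * W v = 0\<^sub>m r r)"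

lemma frep_wrep: "frep G W d r \<Longrightarrow> wrep G W d r"
  unfolding frep_def wrep_def by auto

lemma wrep_bsum: fixes G :: "'v \<Rightarrow> 'v \<Rightarrow> bool" assumes "wrep G W d r" "wrep G W' d' r'" shows "wrep G (\<lambda>u. bsum (W u) (W' u)) (d+d') (r+r')"
  unfolding wrep_def
proof (intro conjI allI impI)
  fix u :: 'v show "orthc (bsum (W u) (W' u)) (d + d') (r + r')"
    using assms unfolding wrep_def by (intro bsum_orthc) auto
next
  fix u v :: 'v assume "u \<noteq> v" "\<not> G u v"
  thus "mat_adjoint (bsum (W u) (W' u)) * bsum (W v) (W' v) = 0\<^sub>m (r + r') (r + r')"
    using assms unfolding wrep_def by (subst bsum_inner) auto
qed

lemma frep_bsum: fixes G :: "'v \<Rightarrow> 'v \<Rightarrow> bool" assumes "wrep G W d r" "frep G W' d' r'" shows "frep G (\<lambda>u. bsum (W u) (W' u)) (d+d') (r+r')"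
  unfolding frep_def
proof (intro conjI allI impI)
  fix u :: 'v show "orthc (bsum (W u) (W' u)) (d + d') (r + r')"
    using assms unfolding wrep_def frep_def by (intro bsum_orthc) auto
next
  fix u v :: 'v assume uv: "u \<noteq> v"
  have "mat_adjoint (bsum (W u) (W' u)) * bsum (W v) (W' v) = 0\<^sub>m (r + r') (r + r') \<longleftrightarrow>
     mat_adjoint (W u) * W v = 0\<^sub>m r r \<and> mat_adjoint (W' u) * W' v = 0\<^sub>m r' r'"
    using assms unfolding wrep_def frep_def by (intro bsum_inner) auto
  also have "\<dots> \<longleftrightarrow> \<not> G u v" using assms uv unfolding wrep_def frep_def by auto
  finally show "(mat_adjoint (bsum (W u) (W' u)) * bsum (W v) (W' v) = 0\<^sub>m (r + r') (r + r')) = (\<not> G u v)" .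
qed

lemma wrep_zero: "wrep G (\<lambda>u. 0\<^sub>m 0 0) 0 0"
  unfolding wrep_def orthc_def by (auto intro!: eq_matI)

lemma wrep_mult: assumes "wrep G W d r" shows "\<exists>W'. wrep G W' (k*d) (k*r)"
proof (induction k)
  case 0 show ?case using wrep_zero by auto
next
  case (Suc k)
  then obtain W' where "wrep G W' (k*d) (k*r)" by blast
  from wrep_bsum[OF assms this] show ?case by (auto simp: add.commute)
qed

lemma frep_osr: fixes G :: "'v \<Rightarrow> 'v \<Rightarrow> bool" assumes G: "simple_graph G" and f: "frep G W d r"
  shows "faithful_osr G d r (\<lambda>u. vec_space.col_space d (W u))"
  unfolding faithful_osr_def
proof (intro conjI allI impI)
  fix u :: 'v show "dim_subspace d r (vec_space.col_space d (W u))"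
  proof -
    have o: "orthc (W u) d r" using f unfolding frep_def by auto
    show ?thesis using dim_sub_rank[OF _ rank_orthc[OF o]] o unfolding orthc_def by auto
  qed
next
  fix u v :: 'v assume uv: "u \<noteq> v"
  have W: "W u \<in> carrier_mat d r" "W v \<in> carrier_mat d r" using f unfolding frep_def orthc_def by auto
  have "subspaces_orth (vec_space.col_space d (W u)) (vec_space.col_space d (W v)) \<longleftrightarrow>
      mat_adjoint (W v) * W u = 0\<^sub>m r r" by (rule orth_iff[OF W])
  also have "\<dots> \<longleftrightarrow> \<not> G v u" using f uv unfolding frep_def by auto
  also have "\<dots> \<longleftrightarrow> \<not> G u v" using G unfolding simple_graph_def by auto
  finally show "subspaces_orth (vec_space.col_space d (W u)) (vec_space.col_space d (W v)) = (\<not> G u v)" .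
qed

lemma osr_frep: fixes G :: "'v \<Rightarrow> 'v \<Rightarrow> bool" assumes G: "simple_graph G" and f: "faithful_osr G d r S"
  shows "\<exists>W. frep G W d r"
proof -
  have "\<forall>u. \<exists>W. orthc W d r \<and> vec_space.col_space d W = S u"
    using f gs_basis unfolding faithful_osr_def by blast
  then obtain W where W: "\<And>u. orthc (W u) d r" "\<And>u. vec_space.col_space d (W u) = S u" by metis
  have "frep G W d r" unfolding frep_def
  proof (intro conjI allI impI W)
    fix u v :: 'v assume uv: "u \<noteq> v"
    have C: "W u \<in> carrier_mat d r" "W v \<in> carrier_mat d r" using W unfolding orthc_def by auto
    have "mat_adjoint (W u) * W v = 0\<^sub>m r r \<longleftrightarrow> subspaces_orth (S v) (S u)"
      using orth_iff[OF C(2) C(1)] W(2) by simp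
    also have "\<dots> \<longleftrightarrow> \<not> G v u" using f uv unfolding faithful_osr_def by auto
    also have "\<dots> \<longleftrightarrow> \<not> G u v" using G unfolding simple_graph_def by auto
    finally show "(mat_adjoint (W u) * W v = 0\<^sub>m r r) = (\<not> G u v)" .
  qed
  thus ?thesis by blast
qed

lemma frep_dr: fixes G :: "'v \<Rightarrow> 'v \<Rightarrow> bool" assumes f: "frep G W d r"
  shows "dr_representation (complement_graph G) d r (\<lambda>u. W u * mat_adjoint (W u))" "r \<le> d"
proof -
  show "dr_representation (complement_graph G) d r (\<lambda>u. W u * mat_adjoint (W u))"
    unfolding dr_representation_def
  proof (intro conjI allI impI)
    fix u :: 'v
    have o: "orthc (W u) d r" using f unfolding frep_def by auto
    note p = proj_props[OF o]
    show "W u * mat_adjoint (W u) \<in> carrier_mat d d" "vec_space.rank d (W u * mat_adjoint (W u)) = r"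
      "mat_adjoint (W u * mat_adjoint (W u)) = W u * mat_adjoint (W u)"
      "W u * mat_adjoint (W u) * (W u * mat_adjoint (W u)) = W u * mat_adjoint (W u)" using p by auto
  next
    fix u v :: 'v assume "complement_graph G u v"
    hence "u \<noteq> v" "\<not> G u v" unfolding complement_graph_def by auto
    hence "mat_adjoint (W u) * W v = 0\<^sub>m r r" using f unfolding frep_def by auto
    thus "W u * mat_adjoint (W u) * (W v * mat_adjoint (W v)) = 0\<^sub>m d d"
      using proj_zero f unfolding frep_def by blast
  qed
  obtain u :: 'v where True by simp
  have o: "orthc (W u) d r" using f unfolding frep_def by auto
  interpret vec_space "TYPE(complex)" d .
  show "r \<le> d" using rank_le_nc[OF proj_props(1)[OF o]] proj_props(4)[OF o] by simp
qed

lemma dr_wrep: fixes G :: "'v \<Rightarrow> 'v \<Rightarrow> bool" assumes dr: "dr_representation (complement_graph G) d r P"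
  shows "\<exists>W. wrep G W d r"
proof -
  have "\<forall>u. \<exists>W. orthc W d r \<and> W * mat_adjoint W = P u"
    using dr proj_factor unfolding dr_representation_def by blast
  then obtain W where W: "\<And>u. orthc (W u) d r" "\<And>u. W u * mat_adjoint (W u) = P u" by metis
  have "wrep G W d r" unfolding wrep_def
  proof (intro conjI allI impI W)
    fix u v :: 'v assume "u \<noteq> v" "\<not> G u v"
    hence PP: "P u * P v = 0\<^sub>m d d" using dr unfolding dr_representation_def complement_graph_def by auto
    have Wu: "W u \<in> carrier_mat d r" "mat_adjoint (W u) * W u = 1\<^sub>m r" 
     and Wv: "W v \<in> carrier_mat d r" "mat_adjoint (W v) * W v = 1\<^sub>m r"
      using W(1)[of u] W(1)[of v] unfolding orthc_def by auto
    have Wua: "mat_adjoint (W u) \<in> carrier_mat r d" and Wva: "mat_adjoint (W v) \<in> carrier_mat r d"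
      using Wu Wv by auto
    have Pu: "P u \<in> carrier_mat d d" and Pv: "P v \<in> carrier_mat d d" using dr unfolding dr_representation_def by auto
    have a: "mat_adjoint (W u) * P u = mat_adjoint (W u)"
      unfolding W(2)[of u, symmetric] using assoc_mult_mat[OF Wua Wu(1) Wua] Wu Wua by simp
    have b: "P v * W v = W v"
      unfolding W(2)[of v, symmetric] using assoc_mult_mat[OF Wv(1) Wva Wv(1)] Wv by simp
    have "mat_adjoint (W u) * W v = (mat_adjoint (W u) * P u) * (P v * W v)" using a b by simp
    also have "\<dots> = mat_adjoint (W u) * (P u * (P v * W v))" by (rule assoc_mult_mat[OF Wua Pu]) (use Pv Wv in auto)
    also have "P u * (P v * W v) = (P u * P v) * W v" using assoc_mult_mat[OF Pu Pv Wv(1)] by simp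
    also have "\<dots> = 0\<^sub>m d r" using PP Wv by simp
    also have "mat_adjoint (W u) * 0\<^sub>m d r = 0\<^sub>m r r" using right_mult_zero_mat[OF Wua] by simp
    finally show "mat_adjoint (W u) * W v = 0\<^sub>m r r" .
  qed
  thus ?thesis by blast
qed

lemma nrm_self: fixes u :: "complex vec" assumes "u \<in> carrier_vec n" "u \<noteq> 0\<^sub>v n"
  shows "nrm u \<bullet>c nrm u = 1"
proof -
  let ?z = "u \<bullet>c u"
  have p: "Re ?z > 0" "?z = of_real (Re ?z)" using norm_cscalar[OF assms] by auto
  have "nrm u \<bullet>c nrm u = complex_of_real (1 / sqrt (Re ?z)) * complex_of_real (1 / sqrt (Re ?z)) * of_real (Re ?z)"
    using nrm_cscalar[OF assms(1) assms(1)] p(2) by simp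
  also have "\<dots> = complex_of_real (1 / sqrt (Re ?z) * (1 / sqrt (Re ?z)) * Re ?z)" by (simp only: of_real_mult)
  also have "1 / sqrt (Re ?z) * (1 / sqrt (Re ?z)) * Re ?z = 1"
    using p(1) by (simp add: field_simps)
  finally show ?thesis by simp
qed

lemma nrm_zero_iff: fixes u v :: "complex vec" assumes "u \<in> carrier_vec n" "u \<noteq> 0\<^sub>v n" "v \<in> carrier_vec n" "v \<noteq> 0\<^sub>v n"
  shows "nrm u \<bullet>c nrm v = 0 \<longleftrightarrow> u \<bullet>c v = 0"
proof -
  have "Re (u \<bullet>c u) > 0" "Re (v \<bullet>c v) > 0" using norm_cscalar assms by blast+
  thus ?thesis using nrm_cscalar[OF assms(1) assms(3)] by simp
qed

lemma nrm_carrier[simp]: "u \<in> carrier_vec n \<Longrightarrow> nrm u \<in> carrier_vec n"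
  unfolding nrm_def by simp

lemma one_rep: fixes G :: "'v::finite \<Rightarrow> 'v \<Rightarrow> bool"
  assumes G: "simple_graph G" shows "\<exists>m W. frep G W m 1"
proof -
  define n where "n = card (UNIV :: 'v set)"
  obtain f :: "'v \<Rightarrow> nat" where f: "bij_betw f UNIV {0..<n}"
    using ex_bij_betw_finite_nat[of "UNIV :: 'v set"] unfolding n_def by auto
  define g where "g = inv_into UNIV f"
  have gf: "g (f u) = u" for u unfolding g_def using f by (simp add: bij_betw_def)
  have fn: "f u < n" for u using f by (auto simp: bij_betw_def)
  define C where "C u k \<longleftrightarrow> (g (k div n) = u \<or> g (k mod n) = u) \<and>
      (g (k div n) = g (k mod n) \<or> G (g (k div n)) (g (k mod n)))" for u k
  define x where "x u = vec (n*n) (\<lambda>k. if C u k then 1 else (0::complex))" for u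
  have xC: "x u \<in> carrier_vec (n*n)" for u unfolding x_def by simp
  have kidx: "f u * n + f v < n * n" "(f u * n + f v) div n = f u" "(f u * n + f v) mod n = f v" for u v
  proof -
    have "f u * n + f v < f u * n + n" using fn[of v] by simp
    also have "\<dots> = Suc (f u) * n" by simp
    also have "\<dots> \<le> n * n" using fn[of u] by (intro mult_le_mono1) simp
    finally show "f u * n + f v < n * n" .
    show "(f u * n + f v) div n = f u" "(f u * n + f v) mod n = f v" using fn[of v] by auto
  qed
  have xnz: "x u \<noteq> 0\<^sub>v (n*n)" for u
  proof
    assume "x u = 0\<^sub>v (n*n)"
    hence "x u $ (f u * n + f u) = 0" using kidx by simp
    moreover have "C u (f u * n + f u)" unfolding C_def using kidx gf by simp
    ultimately show False unfolding x_def using kidx by simp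
  qed
  have ip: "x u \<bullet>c x v = (\<Sum>k\<in>{0..<n*n}. if C u k \<and> C v k then 1 else 0)" for u v
    unfolding x_def scalar_prod_def by (auto intro!: sum.cong)
  have ip0: "x u \<bullet>c x v = 0 \<longleftrightarrow> \<not> G u v" if uv: "u \<noteq> v" for u v
  proof
    assume z: "x u \<bullet>c x v = 0"
    show "\<not> G u v"
    proof
      assume Guv: "G u v"
      let ?k = "f u * n + f v"
      have Ck: "C u ?k \<and> C v ?k" unfolding C_def using kidx gf Guv by simp
      have "(\<Sum>k\<in>{0..<n*n}. (if C u k \<and> C v k then 1 else 0) :: complex) =
        of_nat (card ({0..<n*n} \<inter> {k. C u k \<and> C v k}))"
        by (simp add: sum.If_cases)
      moreover have "card ({0..<n*n} \<inter> {k. C u k \<and> C v k}) > 0"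
      proof -
        have "?k \<in> {0..<n*n} \<inter> {k. C u k \<and> C v k}" using Ck kidx(1)[of u v] by simp
        thus ?thesis by (subst card_gt_0_iff) auto
      qed
      ultimately show False using z ip[of u v] by simp
    qed
  next
    assume nG: "\<not> G u v"
    have "\<not> (C u k \<and> C v k)" for k
    proof
      assume "C u k \<and> C v k"
      thus False using uv nG G unfolding C_def simple_graph_def by metis
    qed
    thus "x u \<bullet>c x v = 0" using ip[of u v] by simp
  qed
  define W where "W u = mat_of_cols (n*n) [nrm (x u)]" for u
  have WC: "W u \<in> carrier_mat (n*n) 1" for u unfolding W_def carrier_mat_def by simp
  have colW: "col (W u) 0 = nrm (x u)" for u unfolding W_def using xC by simp
  have ent: "mat_adjoint (W u) * W v = mat 1 1 (\<lambda>_. nrm (x v) \<bullet>c nrm (x u))" for u v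
  proof (rule eq_matI)
    fix i j assume "i < dim_row (mat 1 1 (\<lambda>_. nrm (x v) \<bullet>c nrm (x u)))" "j < dim_col (mat 1 1 (\<lambda>_. nrm (x v) \<bullet>c nrm (x u)))"
    hence ij: "i = 0" "j = 0" by auto
    show "(mat_adjoint (W u) * W v) $$ (i,j) = mat 1 1 (\<lambda>_. nrm (x v) \<bullet>c nrm (x u)) $$ (i,j)"
      using adj_entry[OF WC[of v] WC[of u], of 0 0] ij colW by simp
  qed (use WC in auto)
  have "frep G W (n*n) 1" unfolding frep_def
  proof (intro conjI allI impI)
    fix u :: 'v
    show "orthc (W u) (n*n) 1" unfolding orthc_def
      using ent[of u u] nrm_self[OF xC xnz] WC by (auto intro!: eq_matI)
  next
    fix u v :: 'v assume uv: "u \<noteq> v"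
    have "mat_adjoint (W u) * W v = 0\<^sub>m 1 1 \<longleftrightarrow> nrm (x v) \<bullet>c nrm (x u) = 0"
      unfolding ent by (auto simp: mat_eq_iff)
    also have "\<dots> \<longleftrightarrow> x v \<bullet>c x u = 0" by (rule nrm_zero_iff[OF xC xnz xC xnz])
    also have "\<dots> \<longleftrightarrow> \<not> G v u" using ip0 uv by auto
    also have "\<dots> \<longleftrightarrow> \<not> G u v" using G unfolding simple_graph_def by auto
    finally show "(mat_adjoint (W u) * W v = 0\<^sub>m 1 1) = (\<not> G u v)" .
  qed
  thus ?thesis by blast
qed

lemma frep_ex: fixes G :: "'v::finite \<Rightarrow> 'v \<Rightarrow> bool"
  assumes G: "simple_graph G" and r: "0 < r" shows "\<exists>d W. frep G W d r"
proof -
  obtain m w where w: "frep G w m 1" using one_rep[OF G] by blast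
  obtain W' where W': "wrep G W' ((r-1)*m) ((r-1)*1)" using wrep_mult[OF frep_wrep[OF w]] by blast
  have "frep G (\<lambda>u. bsum (W' u) (w u)) ((r-1)*m + m) ((r-1)*1 + 1)" by (rule frep_bsum[OF W' w])
  thus ?thesis using r by auto
qed

lemma mr_osr: fixes G :: "'v::finite \<Rightarrow> 'v \<Rightarrow> bool"
  assumes G: "simple_graph G" and r: "0 < r" shows "\<exists>S. faithful_osr G (mr_plus_fold G r) r S"
proof -
  obtain d W where "frep G W d r" using frep_ex[OF G r] by blast
  hence "\<exists>d S. faithful_osr G d r S" using frep_osr[OF G] by blast
  thus ?thesis unfolding mr_plus_fold_def by (rule LeastI2_ex) auto
qed

lemma mr_le: "faithful_osr G d r S \<Longrightarrow> mr_plus_fold G r \<le> d"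
  unfolding mr_plus_fold_def by (rule Least_le) blast

theorem mainTheorem1:
  fixes G :: "'v::finite \<Rightarrow> 'v \<Rightarrow> bool"
  assumes "simple_graph G"
  shows "projective_rank (complement_graph G) = mr_plus_frac G"
proof -
  note G = assms
  define PR where "PR = {real d / real r | d r. 0 < r \<and> r \<le> d \<and>
      (\<exists>P. dr_representation (complement_graph G) d r P)}"
  define MF where "MF = {real (mr_plus_fold G r) / real r | r. 0 < r}"
  have inPR: "real (mr_plus_fold G r) / real r \<in> PR" if r: "0 < r" for r
  proof -
    obtain S where "faithful_osr G (mr_plus_fold G r) r S" using mr_osr[OF G r] by blast
    then obtain W where f: "frep G W (mr_plus_fold G r) r" using osr_frep[OF G] by blast
    show ?thesis unfolding PR_def using frep_dr[OF f] r by blast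
  qed
  have PRne: "PR \<noteq> {}" using inPR[of 1] by auto
  have MFne: "MF \<noteq> {}" unfolding MF_def by auto
  have PRbdd: "bdd_below PR" unfolding PR_def by (rule bdd_belowI[of _ 0]) auto
  have MFbdd: "bdd_below MF" unfolding MF_def by (rule bdd_belowI[of _ 0]) auto
  have le1: "Inf PR \<le> Inf MF"
  proof (rule cInf_greatest[OF MFne])
    fix x assume "x \<in> MF"
    then obtain r where "x = real (mr_plus_fold G r) / real r" "0 < r" unfolding MF_def by blast
    thus "Inf PR \<le> x" using inPR cInf_lower[OF _ PRbdd] by blast
  qed
  have le2: "Inf MF \<le> Inf PR"
  proof (rule cInf_greatest[OF PRne])
    fix x assume "x \<in> PR"
    then obtain d r P where x: "x = real d / real r" and r: "0 < r" and dr: "dr_representation (complement_graph G) d r P"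
      unfolding PR_def by blast
    obtain W where W: "wrep G W d r" using dr_wrep[OF dr] by blast
    obtain m w where w: "frep G w m 1" using one_rep[OF G] by blast
    show "Inf MF \<le> x"
    proof (rule field_le_epsilon)
      fix e :: real assume e: "0 < e"
      obtain k :: nat where k: "real m / (real r * e) < real k" using reals_Archimedean2 by blast
      have kpos: "0 < real k" using k r e by (smt (verit) divide_nonneg_pos of_nat_0_le_iff of_nat_0_less_iff mult_pos_pos)
      obtain W' where W': "wrep G W' (k*d) (k*r)" using wrep_mult[OF W] by blast
      have f: "frep G (\<lambda>u. bsum (W' u) (w u)) (k*d + m) (k*r + 1)" by (rule frep_bsum[OF W' w])
      have "mr_plus_fold G (k*r+1) \<le> k*d + m" using mr_le frep_osr[OF G f] by blast
      hence "real (mr_plus_fold G (k*r+1)) \<le> real (k*d+m)" by (simp only: of_nat_le_iff)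
      hence "real (mr_plus_fold G (k*r+1)) / real (k*r+1) \<le> real (k*d+m) / real (k*r+1)"
        by (rule divide_right_mono) simp
      moreover have "Inf MF \<le> real (mr_plus_fold G (k*r+1)) / real (k*r+1)"
        by (rule cInf_lower[OF _ MFbdd]) (unfold MF_def, rule CollectI, rule exI[of _ "k*r+1"], simp)
      moreover have "real (k*d+m) / real (k*r+1) \<le> x + e"
      proof -
        have kr: "0 < real k * real r" using kpos r by simp
        have "real (k*d+m) / real (k*r+1) \<le> real (k*d+m) / (real k * real r)"
          using kr by (intro divide_left_mono) auto
        also have "\<dots> = real d / real r + real m / (real k * real r)"
          using kpos r by (simp add: field_simps)
        also have "real m / (real k * real r) < e"
        proof -
          have "real m < real k * (real r * e)" using k r e by (simp add: field_simps)
          thus ?thesis using kr by (simp add: field_simps)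
        qed
        finally show ?thesis using x by simp
      qed
      ultimately show "Inf MF \<le> x + e" by linarith
    qed
  qed
  show ?thesis unfolding projective_rank_def mr_plus_frac_def
    using le1 le2 unfolding PR_def MF_def by linarith
qed

end
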